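(* Let $n_1>n_2>n_3$ be pairwise coprime positive integers forming a minimal system of generators of $\mathcal S=\langle n_1,n_2,n_3\rangle$. Define $$C_1=\min_{\alpha=1,\dots,I_1}\left\{\alpha n_2-[-n_3n_1^{-1}]_{n_2}\left\lfloor\frac{\alpha n_1}{[n_3n_2^{-1}]_{n_1}}\right\rfloor\right\},\quad C_2=\min_{\beta=1,\dots,I_2}\left\{\beta n_1-[-n_3n_2^{-1}]_{n_1}\left\lfloor\frac{\beta n_2}{[n_3n_1^{-1}]_{n_2}}\right\rfloor\right\},$$ $$C_3=\min_{\gamma=1,\dots,I_3}\left\{\gamma n_1-[-n_2n_3^{-1}]_{n_1}\left\lfloor\frac{\gamma n_3}{[n_2n_1^{-1}]_{n_3}}\right\rfloor\right\},$$ where $I_1=\left\lceil [-n_3n_1^{-1}]_{n_2}\frac{[n_3n_2^{-1}]_{n_1}}{n_3}\right\rceil$, $I_2=\left\lceil [-n_3n_2^{-1}]_{n_1}\frac{[n_3n_1^{-1}]_{n_2}}{n_3}\right\rceil$, $I_3=\left\lceil [-n_2n_3^{-1}]_{n_1}\frac{[n_2n_1^{-1}]_{n_3}}{n_2}\right\rceil$. Then the Frobenius number of $\mathcal S$ is $$F(\mathcal S)=C_1n_1+\max\left\{[C_2n_2n_3^{-1}]_{n_1}\,n_3,\ [C_3n_3n_2^{-1}]_{n_1}\,n_2\right\}-n_1-n_2-n_3 .$$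
   Context: $\mathbb N$ denotes the nonnegative integers. For integers $a_1,\dots,a_r$, $\langle a_1,\dots,a_r\rangle=\{\sum t_la_l: t_l\in\mathbb N\}$. Minimal system of generators means that no $n_l$ belongs to the monoid generated by the other two. The Frobenius number $F(\mathcal S)$ is the largest integer not in $\mathcal S$. For an integer $m$ and $n\ge 1$, $[m]_n\in\{0,\dots,n-1\}$ denotes the remainder of $m$ upon division by $n$; for $a$ coprime to $n$, the symbol $a^{-1}$ inside $[\cdot]_n$ denotes a multiplicative inverse of $a$ modulo $n$ (so e.g. $[C_2n_2n_3^{-1}]_{n_1}$ is the remainder modulo $n_1$ of $C_2n_2$ times an inverse of $n_3$ modulo $n_1$). *)

theory Defs
  imports "HOL-Number_Theory.Number_Theory"
begin

definition mon2 :: "int \<Rightarrow> int \<Rightarrow> int set" where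
  "mon2 a b = {int t1 * a + int t2 * b | t1 t2. True}"

definition mon3 :: "int \<Rightarrow> int \<Rightarrow> int \<Rightarrow> int set" where
  "mon3 a b c = {int t1 * a + int t2 * b + int t3 * c | t1 t2 t3. True}"

definition frobenius :: "int set \<Rightarrow> int" where
  "frobenius S = (GREATEST x. x \<notin> S)"

text \<open>[a * b^{-1}]_n : the remainder in {0..n-1} of a times an inverse of b modulo n
  (well defined when b is coprime to n).\<close>
definition remq :: "int \<Rightarrow> int \<Rightarrow> int \<Rightarrow> int" where
  "remq a b n = (THE r. 0 \<le> r \<and> r < n \<and> [r * b = a] (mod n))"

end

theory Submission
  imports Defs
begin

lemma mon2_iff: "x \<in> mon2 a b \<longleftrightarrow> (\<exists>s t. s \<ge> 0 \<and> t \<ge> 0 \<and> x = s*a + t*b)"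
proof
  assume "x \<in> mon2 a b"
  then obtain t1 t2 :: nat where "x = int t1 * a + int t2 * b" unfolding mon2_def by blast
  then show "\<exists>s t. s \<ge> 0 \<and> t \<ge> 0 \<and> x = s*a + t*b"
    by (intro exI[of _ "int t1"] exI[of _ "int t2"]) simp
next
  assume "\<exists>s t. s \<ge> 0 \<and> t \<ge> 0 \<and> x = s*a + t*b"
  then obtain s t where h: "s \<ge> 0" "t \<ge> 0" "x = s*a + t*b" by blast
  then have "x = int (nat s) * a + int (nat t) * b" by simp
  then show "x \<in> mon2 a b" unfolding mon2_def by blast
qed

lemma mon2I: "s \<ge> 0 \<Longrightarrow> t \<ge> 0 \<Longrightarrow> x = s*a + t*b \<Longrightarrow> x \<in> mon2 a b"
  using mon2_iff by blast

lemma mon3_iff: "x \<in> mon3 a b c \<longleftrightarrow> (\<exists>s t r. s \<ge> 0 \<and> t \<ge> 0 \<and> r \<ge> 0 \<and> x = s*a + t*b + r*c)"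
proof
  assume "x \<in> mon3 a b c"
  then obtain t1 t2 t3 :: nat where "x = int t1 * a + int t2 * b + int t3 * c" unfolding mon3_def by blast
  then show "\<exists>s t r. s \<ge> 0 \<and> t \<ge> 0 \<and> r \<ge> 0 \<and> x = s*a + t*b + r*c"
    by (intro exI[of _ "int t1"] exI[of _ "int t2"] exI[of _ "int t3"]) simp
next
  assume "\<exists>s t r. s \<ge> 0 \<and> t \<ge> 0 \<and> r \<ge> 0 \<and> x = s*a + t*b + r*c"
  then obtain s t r where h: "s \<ge> 0" "t \<ge> 0" "r \<ge> 0" "x = s*a + t*b + r*c" by blast
  then have "x = int (nat s) * a + int (nat t) * b + int (nat r) * c" by simp
  then show "x \<in> mon3 a b c" unfolding mon3_def by blast
qed

lemma mon2_comm: "x \<in> mon2 a b \<longleftrightarrow> x \<in> mon2 b a"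
  unfolding mon2_iff by (metis add.commute)

lemma mon3_comm23: "x \<in> mon3 a b c \<longleftrightarrow> x \<in> mon3 a c b"
  unfolding mon3_iff
  apply (rule iffI)
   apply (elim exE conjE, rule_tac x=s in exI, rule_tac x=r in exI, rule_tac x=t in exI, simp)
  apply (elim exE conjE, rule_tac x=s in exI, rule_tac x=r in exI, rule_tac x=t in exI, simp)
  done

lemma remq_eq:
  fixes a b n r :: int
  assumes "n > 0" "coprime b n" "0 \<le> r" "r < n" "n dvd (r*b - a)"
  shows "remq a b n = r"
  unfolding remq_def
proof (rule the_equality)
  show "0 \<le> r \<and> r < n \<and> [r * b = a] (mod n)" using assms by (simp add: cong_iff_dvd_diff)
next
  fix r' assume h: "0 \<le> r' \<and> r' < n \<and> [r' * b = a] (mod n)"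
  then have "n dvd (r'*b - a)" by (simp add: cong_iff_dvd_diff)
  with assms(5) have "n dvd (r'*b - a) - (r*b - a)" using dvd_diff by blast
  then have "n dvd (r' - r) * b" by (simp add: algebra_simps)
  then have d: "n dvd (r' - r)" using assms(2)
    by (metis coprime_commute coprime_dvd_mult_left_iff)
  show "r' = r"
  proof (rule ccontr)
    assume "r' \<noteq> r"
    then have "r' - r \<noteq> 0" by simp
    then have "\<bar>n\<bar> \<le> \<bar>r' - r\<bar>" using d by (rule dvd_imp_le_int)
    with h assms show False by linarith
  qed
qed

lemma remq_props:
  fixes a b n :: int
  assumes "n > 0" "coprime b n"
  shows "0 \<le> remq a b n \<and> remq a b n < n \<and> n dvd (remq a b n * b - a)"
proof -
  obtain x where x: "[b * x = 1] (mod n)" using cong_solve_coprime_int assms(2) by blast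
  define r where "r = (a*x) mod n"
  have "[r * b = (a * x) * b] (mod n)" unfolding r_def by (simp add: cong_def mod_mult_left_eq)
  moreover have "[(a*x)*b = a * 1] (mod n)" using x
  proof -
    have e: "a*x*b = a*(b*x)" by (simp add: ac_simps)
    show ?thesis unfolding e by (rule cong_scalar_left[OF x])
  qed
  ultimately have "[r*b = a] (mod n)" using cong_trans by fastforce
  then have d: "n dvd (r*b - a)" by (simp add: cong_iff_dvd_diff)
  have r0: "0 \<le> r" "r < n" using assms(1) unfolding r_def by auto
  have "remq a b n = r" using remq_eq[OF assms r0 d] .
  then show ?thesis using r0 d by simp
qed


lemma no_dvd2: fixes x y :: int
  assumes "coprime x y" "y dvd x" "y \<ge> 2" shows False
proof -
  have "\<bar>y\<bar> = 1" using coprime_common_divisor_int[OF assms(1) assms(2)] by simp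
  with assms(3) show False by simp
qed

lemma dvd_le_lemma: fixes c q x p :: int
  assumes "c*q = x*p" "coprime p q" "c > 0" "p > 0" shows "p \<le> c"
proof -
  have "p dvd c*q" using assms(1) by simp
  then have "p dvd c" using assms(2) coprime_dvd_mult_left_iff by blast
  then show ?thesis using assms(3) zdvd_imp_le by blast
qed

lemma div_mul_le: fixes x v :: int assumes "v > 0" shows "v * (x div v) \<le> x"
proof -
  have "v * (x div v) + x mod v = x" by (rule mult_div_mod_eq)
  moreover have "x mod v \<ge> 0" using assms by simp
  ultimately show ?thesis by linarith
qed

lemma div_mul_gt: fixes x v :: int assumes "v > 0" shows "x < v * (x div v) + v"
proof -
  have "v * (x div v) + x mod v = x" by (rule mult_div_mod_eq)
  moreover have "x mod v < v" using assms by simp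
  ultimately show ?thesis by linarith
qed

lemma div_add_le: fixes x y v :: int assumes "v > 0"
  shows "(x + y) div v \<le> x div v + y div v + 1"
proof -
  have "v * ((x+y) div v) \<le> x + y" by (rule div_mul_le[OF assms])
  moreover have "x < v * (x div v) + v" by (rule div_mul_gt[OF assms])
  moreover have "y < v * (y div v) + v" by (rule div_mul_gt[OF assms])
  ultimately have "v * ((x+y) div v) < v * (x div v + y div v + 2)"
    by (simp add: algebra_simps)
  then have "(x+y) div v < x div v + y div v + 2" using assms
    using mult_less_cancel_left_pos by blast
  then show ?thesis by linarith
qed

lemma key_identity:
  fixes a b e :: int
  assumes a2: "a \<ge> 2" and b2: "b \<ge> 2" and e0: "e > 0" and eb: "e < b"
    and cab: "coprime a b" and cae: "coprime a e" and cbe: "coprime b e"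
  shows "remq e b a * b - remq (-e) a b * a = e \<and> 1 \<le> remq (-e) a b \<and> remq (-e) a b < b
         \<and> 1 \<le> remq e b a \<and> remq e b a < a"
proof -
  define u where "u = remq (-e) a b"
  define v where "v = remq e b a"
  have U: "0 \<le> u" "u < b" "b dvd (u*a - (-e))"
    using remq_props[of b a "-e"] b2 cab unfolding u_def by auto
  have V: "0 \<le> v" "v < a" "a dvd (v*b - e)"
    using remq_props[of a b e] a2 cab unfolding v_def by (auto simp: coprime_commute)
  have U3: "b dvd (u*a + e)" using U(3) by simp
  have u1: "u \<ge> 1"
  proof (rule ccontr)
    assume "\<not> u \<ge> 1" then have "u = 0" using U by simp
    then have "b dvd e" using U3 by simp
    then show False using no_dvd2[of e b] cbe b2 by (simp add: coprime_commute)
  qed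
  have v1: "v \<ge> 1"
  proof (rule ccontr)
    assume "\<not> v \<ge> 1" then have "v = 0" using V by simp
    then have "a dvd e" using V(3) by (simp add: dvd_minus_iff)
    then show False using no_dvd2[of e a] cae a2 by (simp add: coprime_commute)
  qed
  obtain w where w: "u*a + e = b*w" using U3 by (auto elim: dvdE)
  have "b*w > 0" using w U e0 a2 by (smt (verit) mult_nonneg_nonneg)
  then have w0: "w > 0" using b2 by (simp add: zero_less_mult_iff)
  have "u*a \<le> (b-1)*a" using U a2 by (intro mult_right_mono) auto
  also have "(b-1)*a = b*a - a" by (simp add: algebra_simps)
  finally have "u*a \<le> b*a - a" .
  then have "b*w < b*a + b" using w eb a2 by linarith
  then have "b*w < b*(a+1)" by (simp add: algebra_simps)
  then have "w < a + 1" using b2 mult_less_cancel_left_pos by fastforce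
  moreover have "w \<noteq> a"
  proof
    assume "w = a"
    then have "e = (b - u)*a" using w by (simp add: algebra_simps)
    then have "a dvd e" by simp
    then show False using no_dvd2[of e a] cae a2 by (simp add: coprime_commute)
  qed
  ultimately have wa: "w < a" by simp
  have "a dvd (v*b - e) - (u*a)" using V(3) by simp
  moreover have "(v*b - e) - u*a = (v - w)*b" using w by (simp add: algebra_simps)
  ultimately have "a dvd (v - w)*b" by simp
  then have d: "a dvd (v - w)" using cab coprime_dvd_mult_left_iff by blast
  have "v = w"
  proof (rule ccontr)
    assume "v \<noteq> w" then have "v - w \<noteq> 0" by simp
    then have "\<bar>a\<bar> \<le> \<bar>v - w\<bar>" using d by (rule dvd_imp_le_int)
    with V wa w0 show False by linarith
  qed
  then have "v*b - u*a = e" using w by (simp add: algebra_simps)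
  then show ?thesis using u1 v1 U V unfolding u_def v_def by simp
qed


lemma Lmain:
  fixes a b e :: int
  assumes a2: "a \<ge> 2" and b2: "b \<ge> 2" and e0: "e > 0" and eb: "e < b"
    and cab: "coprime a b" and cae: "coprime a e" and cbe: "coprime b e"
  shows "Min ((\<lambda>\<alpha>. \<alpha> * b - remq (- e) a b *
                 \<lfloor>real_of_int (\<alpha> * a) / real_of_int (remq e b a)\<rfloor>)
           ` {1..\<lceil>real_of_int (remq (- e) a b) * real_of_int (remq e b a) / real_of_int e\<rceil>})
         \<ge> 1 \<and>
         Min ((\<lambda>\<alpha>. \<alpha> * b - remq (- e) a b *
                 \<lfloor>real_of_int (\<alpha> * a) / real_of_int (remq e b a)\<rfloor>)
           ` {1..\<lceil>real_of_int (remq (- e) a b) * real_of_int (remq e b a) / real_of_int e\<rceil>}) * a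
         \<in> mon2 b e \<and>
         (\<forall>c. c \<ge> 1 \<longrightarrow> c * a \<in> mon2 b e \<longrightarrow>
         Min ((\<lambda>\<alpha>. \<alpha> * b - remq (- e) a b *
                 \<lfloor>real_of_int (\<alpha> * a) / real_of_int (remq e b a)\<rfloor>)
           ` {1..\<lceil>real_of_int (remq (- e) a b) * real_of_int (remq e b a) / real_of_int e\<rceil>}) \<le> c)"
proof -
  define u where "u = remq (-e) a b"
  define v where "v = remq e b a"
  define I where "I = \<lceil>real_of_int u * real_of_int v / real_of_int e\<rceil>"
  define g where "g = (\<lambda>\<alpha>::int. \<alpha> * b - u * ((\<alpha> * a) div v))"
  have KI: "v*b - u*a = e" "1 \<le> u" "u < b" "1 \<le> v" "v < a"
    using key_identity[OF assms] unfolding u_def v_def by auto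
  have gfl: "(\<lambda>\<alpha>. \<alpha> * b - u * \<lfloor>real_of_int (\<alpha> * a) / real_of_int v\<rfloor>) = g"
    unfolding g_def by (intro ext) (simp only: floor_divide_of_int_eq)
  have Ure: "b dvd (u*a + e)"
    using remq_props[of b a "-e"] b2 cab unfolding u_def by auto
  have "real_of_int u * real_of_int v / real_of_int e \<le> real_of_int I"
    unfolding I_def by simp
  then have "real_of_int u * real_of_int v \<le> real_of_int I * real_of_int e"
    using e0 by (simp add: pos_divide_le_eq)
  then have Ie: "u*v \<le> I*e" by (metis of_int_le_iff of_int_mult)
  have "u*v > 0" using KI by simp
  then have "I*e > 0" using Ie by linarith
  then have I1: "I \<ge> 1" using e0 by (simp add: zero_less_mult_iff)
  have vg: "v * g \<alpha> \<ge> \<alpha> * e" if "\<alpha> \<ge> 1" for \<alpha>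
  proof -
    have "v * ((\<alpha>*a) div v) \<le> \<alpha>*a" using KI by (intro div_mul_le) simp
    then have "u * (v * ((\<alpha>*a) div v)) \<le> u * (\<alpha>*a)" using KI by (intro mult_left_mono) auto
    moreover have "v * g \<alpha> = \<alpha>*b*v - u * (v * ((\<alpha>*a) div v))" unfolding g_def by (simp add: algebra_simps)
    moreover have "\<alpha> * e = \<alpha>*b*v - u*(\<alpha>*a)" using KI(1) by (metis (no_types, lifting) mult.commute mult.left_commute right_diff_distrib)
    ultimately show ?thesis by linarith
  qed
  have gpos: "g \<alpha> \<ge> 1" if "\<alpha> \<ge> 1" for \<alpha>
  proof -
    have "\<alpha> * e > 0" using that e0 by simp
    then have "v * g \<alpha> > 0" using vg[OF that] by linarith
    then show ?thesis using KI by (simp add: zero_less_mult_iff)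
  qed
  have gmem: "g \<alpha> * a \<in> mon2 b e" if "\<alpha> \<ge> 1" for \<alpha>
  proof -
    define d where "d = (\<alpha>*a) div v"
    have d0: "d \<ge> 0" unfolding d_def using that a2 KI by (simp add: pos_imp_zdiv_nonneg_iff)
    have r0: "\<alpha>*a - d*v \<ge> 0" unfolding d_def using div_mul_le[of v "\<alpha>*a"] KI by (simp add: mult.commute)
    have "g \<alpha> * a - ((\<alpha>*a - d*v)*b + d*e) = d*(v*b - u*a - e)"
      unfolding g_def d_def by (simp add: algebra_simps)
    then have "g \<alpha> * a = (\<alpha>*a - d*v)*b + d*e" using KI(1) by simp
    then show ?thesis using d0 r0 by (intro mon2I) auto
  qed
  have glow: "\<exists>\<alpha>. \<alpha> \<ge> 1 \<and> g \<alpha> \<le> c" if cge: "c \<ge> 1" and cm: "c*a \<in> mon2 b e" for c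
  proof -
    obtain s t where st: "s \<ge> 0" "t \<ge> 0" "c*a = s*b + t*e" using cm mon2_iff by blast
    have "a*(c + t*u) = s*b + t*(u*a + e)" using st(3) by (simp add: algebra_simps)
    moreover have "b dvd s*b + t*(u*a + e)" using Ure by simp
    ultimately have "b dvd a*(c + t*u)" by simp
    then have "b dvd (c + t*u)" using cab coprime_dvd_mult_right_iff[of b a] by (simp add: coprime_commute)
    then obtain \<alpha> where al: "c + t*u = b*\<alpha>" by (auto elim: dvdE)
    have "t*u \<ge> 0" using st KI by simp
    then have "b*\<alpha> > 0" using al cge by linarith
    then have al1: "\<alpha> \<ge> 1" using b2 by (simp add: zero_less_mult_iff)
    have "b*(\<alpha>*a) = b*(s + t*v)"
    proof -
      have "b*(\<alpha>*a) = (c + t*u)*a" using al by (simp add: algebra_simps)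
      also have "\<dots> = s*b + t*(u*a + e)" using st(3) by (simp add: algebra_simps)
      also have "u*a + e = v*b" using KI(1) by simp
      finally show ?thesis by (simp add: algebra_simps)
    qed
    then have aa: "\<alpha>*a = s + t*v" using b2 by simp
    have "(t*v) div v \<le> (\<alpha>*a) div v" using aa st KI by (intro zdiv_mono1) auto
    then have td: "t \<le> (\<alpha>*a) div v" using KI by simp
    have "u * t \<le> u * ((\<alpha>*a) div v)" using td KI by (intro mult_left_mono) auto
    then have "g \<alpha> \<le> c" unfolding g_def using al by (simp add: algebra_simps)
    then show ?thesis using al1 by blast
  qed
  have gI: "g I \<ge> u"
  proof -
    have "v * g I \<ge> I*e" using vg[OF I1] .
    then have "v * g I \<ge> v * u" using Ie by (simp add: mult.commute)
    then show ?thesis using KI by (simp add: mult_le_cancel_left_pos)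
  qed
  have gred: "g (\<alpha> - I) \<le> g \<alpha>" if "\<alpha> > I" for \<alpha>
  proof -
    have "(\<alpha>*a) div v = ((\<alpha>-I)*a + I*a) div v" by (simp add: algebra_simps)
    also have "\<dots> \<le> ((\<alpha>-I)*a) div v + (I*a) div v + 1" using KI by (intro div_add_le) simp
    finally have "u * ((\<alpha>*a) div v) \<le> u * (((\<alpha>-I)*a) div v + (I*a) div v + 1)"
      using KI by (intro mult_left_mono) auto
    then have "g \<alpha> \<ge> g (\<alpha> - I) + g I - u" unfolding g_def by (simp add: algebra_simps)
    then show ?thesis using gI by linarith
  qed
  have gmin: "\<exists>\<beta>\<in>{1..I}. g \<beta> \<le> g \<alpha>" if "\<alpha> \<ge> 1" for \<alpha>
    using that
  proof (induction "nat \<alpha>" arbitrary: \<alpha> rule: less_induct)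
    case less
    show ?case
    proof (cases "\<alpha> \<le> I")
      case True then show ?thesis using less.prems by auto
    next
      case False
      then have "\<alpha> - I \<ge> 1" "nat (\<alpha> - I) < nat \<alpha>" using I1 by auto
      then obtain \<beta> where "\<beta> \<in> {1..I}" "g \<beta> \<le> g (\<alpha> - I)" using less.hyps by blast
      moreover have "g (\<alpha> - I) \<le> g \<alpha>" using gred[of \<alpha>] False by simp
      ultimately show ?thesis by (meson order_trans)
    qed
  qed
  define C where "C = Min (g ` {1..I})"
  have fin: "finite (g ` {1..I})" by simp
  have ne: "g ` {1..I} \<noteq> {}" using I1 by auto
  have "C \<in> g ` {1..I}" unfolding C_def using fin ne by (rule Min_in)
  then obtain \<beta> where b: "\<beta> \<in> {1..I}" "C = g \<beta>" by blast
  have P1: "C \<ge> 1" using b gpos by auto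
  have P2: "C * a \<in> mon2 b e" using b gmem by auto
  have P3: "C \<le> c" if h: "c \<ge> 1" "c*a \<in> mon2 b e" for c
  proof -
    obtain \<alpha> where "\<alpha> \<ge> 1" "g \<alpha> \<le> c" using glow[OF h] by blast
    moreover then obtain \<beta> where "\<beta> \<in> {1..I}" "g \<beta> \<le> g \<alpha>" using gmin by blast
    moreover have "C \<le> g \<beta>" unfolding C_def using fin calculation(3) by simp
    ultimately show ?thesis by linarith
  qed
  have CC: "Min ((\<lambda>\<alpha>. \<alpha> * b - remq (- e) a b *
                 \<lfloor>real_of_int (\<alpha> * a) / real_of_int (remq e b a)\<rfloor>)
           ` {1..\<lceil>real_of_int (remq (- e) a b) * real_of_int (remq e b a) / real_of_int e\<rceil>}) = C"
    unfolding C_def I_def gfl[symmetric] u_def v_def ..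
  show ?thesis unfolding CC using P1 P2 P3 by blast
qed


lemma cbound:
  fixes a b e C :: int
  assumes e2: "e \<ge> 2" and a0: "a > 0" and b0: "b > 0" and cae: "coprime a e" and cbe: "coprime b e"
    and nb: "b \<notin> mon2 a e"
    and Cmin: "\<forall>c. c \<ge> 1 \<longrightarrow> c*a \<in> mon2 b e \<longrightarrow> C \<le> c"
  shows "C < e"
proof -
  define k where "k = remq b a e"
  have K: "0 \<le> k" "k < e" "e dvd (k*a - b)"
    using remq_props[of e a b] e2 cae unfolding k_def by auto
  have k1: "k \<noteq> 0"
  proof
    assume "k = 0" then have "e dvd b" using K(3) by (simp add: dvd_minus_iff)
    then show False using no_dvd2[OF cbe] e2 by blast
  qed
  obtain q where q: "k*a - b = e*q" using K(3) by (auto elim: dvdE)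
  show ?thesis
  proof (cases "k*a \<ge> b")
    case True
    then have "e*q \<ge> 0" using q by simp
    then have "q \<ge> 0" using e2 by (simp add: zero_le_mult_iff)
    then have "k*a \<in> mon2 b e" using q by (intro mon2I[of 1 q]) (auto simp: algebra_simps)
    then have "C \<le> k" using Cmin k1 K by auto
    then show ?thesis using K by simp
  next
    case False
    then have "e*q < 0" using q by simp
    then have "-q \<ge> 0" using e2 by (simp add: mult_less_0_iff)
    then have "b \<in> mon2 a e" using q K by (intro mon2I[of k "-q"]) (auto simp: algebra_simps)
    then show ?thesis using nb by blast
  qed
qed

lemma notinS:
  fixes p1 p2 p3 cA cB cC x2 x3 :: int
  assumes pos: "p1 > 0" "p2 > 0" "p3 > 0"
    and hA: "\<forall>k. k \<ge> 1 \<longrightarrow> k*p1 \<in> mon2 p2 p3 \<longrightarrow> cA \<le> k"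
    and hB: "\<forall>k. k \<ge> 1 \<longrightarrow> k*p2 \<in> mon2 p1 p3 \<longrightarrow> cB \<le> k"
    and hC: "\<forall>k. k \<ge> 1 \<longrightarrow> k*p3 \<in> mon2 p1 p2 \<longrightarrow> cC \<le> k"
    and rel: "cA*p1 = x2*p2 + x3*p3" and x30: "x3 \<ge> 0" and x2B: "x2 \<le> cB"
  shows "(x2 - 1)*p2 + (cC - 1)*p3 - p1 \<notin> mon3 p1 p2 p3"
proof
  assume "(x2 - 1)*p2 + (cC - 1)*p3 - p1 \<in> mon3 p1 p2 p3"
  then obtain k b c where kbc: "k \<ge> 0" "b \<ge> 0" "c \<ge> 0"
    "(x2 - 1)*p2 + (cC - 1)*p3 - p1 = k*p1 + b*p2 + c*p3" using mon3_iff by blast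
  define p where "p = x2 - 1 - b"
  define q where "q = cC - 1 - c"
  have E: "p*p2 + q*p3 = (k+1)*p1" using kbc(4) unfolding p_def q_def by (simp add: algebra_simps)
  show False
  proof (cases "p < 0")
    case True
    have "q*p3 = (k+1)*p1 + (-p)*p2" using E by (simp add: algebra_simps)
    moreover have "(k+1)*p1 > 0" using kbc pos by simp
    moreover have "(-p)*p2 \<ge> 0" using True pos by (intro mult_nonneg_nonneg) auto
    ultimately have "q*p3 > 0" "q*p3 \<in> mon2 p1 p2" using True kbc by (auto intro!: mon2I[of "k+1" "-p"])
    then have "q \<ge> 1" "q*p3 \<in> mon2 p1 p2" using pos by (auto simp: zero_less_mult_iff)
    then have "cC \<le> q" using hC by blast
    then show False unfolding q_def using kbc by simp
  next
    case pnn: False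
    show False
    proof (cases "q < 0")
      case True
      have "p*p2 = (k+1)*p1 + (-q)*p3" using E by (simp add: algebra_simps)
      moreover have "(k+1)*p1 > 0" using kbc pos by simp
      moreover have "(-q)*p3 \<ge> 0" using True pos by (intro mult_nonneg_nonneg) auto
      ultimately have "p*p2 > 0" "p*p2 \<in> mon2 p1 p3" using True kbc by (auto intro!: mon2I[of "k+1" "-q"])
      then have "p \<ge> 1" "p*p2 \<in> mon2 p1 p3" using pos by (auto simp: zero_less_mult_iff)
      then have "cB \<le> p" using hB by blast
      then show False unfolding p_def using kbc x2B by simp
    next
      case False
      then have "(k+1)*p1 \<in> mon2 p2 p3" using E pnn by (intro mon2I[of p q]) auto
      then have cAk: "cA \<le> k+1" using hA kbc by simp
      have "(q - x3)*p3 = (k+1-cA)*p1 + (x2-p)*p2" using E rel by (simp add: algebra_simps)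
      moreover have "(k+1-cA)*p1 \<ge> 0" using cAk pos by simp
      moreover have "(x2-p)*p2 > 0" unfolding p_def using kbc pos by simp
      ultimately have "(q-x3)*p3 > 0" "(q - x3)*p3 \<in> mon2 p1 p2"
        using cAk kbc unfolding p_def by (auto intro!: mon2I[of "k+1-cA" "x2 - (x2 - 1 - b)"])
      then have "q - x3 \<ge> 1" "(q - x3)*p3 \<in> mon2 p1 p2" using pos by (auto simp: zero_less_mult_iff)
      then have "cC \<le> q - x3" using hC by blast
      then show False unfolding q_def using kbc x30 by simp
    qed
  qed
qed


lemma reduce:
  fixes n1 n2 n3 c1 c2 c3 x2 x3 y1 y3 z1 z2 :: int
  assumes pos: "n1 > 0" "n2 > 0" "n3 > 0"
    and r1: "c1*n1 = x2*n2 + x3*n3" and r2: "c2*n2 = y1*n1 + y3*n3" and r3: "c3*n3 = z1*n1 + z2*n2"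
    and nn: "c1 \<ge> 1" "y1 \<ge> 1" "z1 \<ge> 1" "x2 \<ge> 0" "x3 \<ge> 0" "y3 \<ge> 0" "z2 \<ge> 0"
  shows "\<forall>b c. b \<ge> 0 \<longrightarrow> c \<ge> 0 \<longrightarrow> int m = b*n2 + c*n3 \<longrightarrow>
     (\<exists>b' c' k. b' \<ge> 0 \<and> c' \<ge> 0 \<and> k \<ge> 0 \<and> b*n2 + c*n3 = k*n1 + b'*n2 + c'*n3 \<and>
        b' < c2 \<and> c' < c3 \<and> (b' < x2 \<or> c' < x3))"
proof (induction m rule: less_induct)
  case (less m)
  show ?case
  proof (intro allI impI)
    fix b c assume b0: "b \<ge> 0" and c0: "c \<ge> 0" and m: "int m = b*n2 + c*n3"
    show "\<exists>b' c' k. b' \<ge> 0 \<and> c' \<ge> 0 \<and> k \<ge> 0 \<and> b*n2 + c*n3 = k*n1 + b'*n2 + c'*n3 \<and>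
        b' < c2 \<and> c' < c3 \<and> (b' < x2 \<or> c' < x3)"
    proof (cases "b \<ge> c2")
      case True
      define B where "B = b - c2"
      define CC where "CC = c + y3"
      have eq: "B*n2 + CC*n3 = b*n2 + c*n3 - y1*n1" unfolding B_def CC_def using r2 by (simp add: algebra_simps)
      have "B*n2 \<ge> 0" "CC*n3 \<ge> 0" using True c0 nn pos unfolding B_def CC_def by simp_all
      moreover have "y1*n1 > 0" using nn pos by simp
      ultimately have lt: "nat (B*n2 + CC*n3) < m" using eq m by linarith
      have B0: "B \<ge> 0" "CC \<ge> 0" using True c0 nn unfolding B_def CC_def by simp_all
      have iv: "int (nat (B*n2 + CC*n3)) = B*n2 + CC*n3" using B0 pos by simp
      obtain b' c' k where h: "b' \<ge> 0" "c' \<ge> 0" "k \<ge> 0" "B*n2 + CC*n3 = k*n1 + b'*n2 + c'*n3"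
        "b' < c2" "c' < c3" "(b' < x2 \<or> c' < x3)" using less.IH[OF lt, rule_format, OF B0 iv] by blast
      have "b*n2 + c*n3 = (k + y1)*n1 + b'*n2 + c'*n3" using h(4) eq by (simp add: algebra_simps)
      moreover have "k + y1 \<ge> 0" using h nn by simp
      ultimately show ?thesis using h by blast
    next
      case nb: False
      show ?thesis
      proof (cases "c \<ge> c3")
        case True
        define B where "B = b + z2"
        define CC where "CC = c - c3"
        have eq: "B*n2 + CC*n3 = b*n2 + c*n3 - z1*n1" unfolding B_def CC_def using r3 by (simp add: algebra_simps)
        have B0: "B \<ge> 0" "CC \<ge> 0" using True b0 nn unfolding B_def CC_def by simp_all
        have "B*n2 \<ge> 0" "CC*n3 \<ge> 0" using B0 pos by simp_all
        moreover have "z1*n1 > 0" using nn pos by simp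
        ultimately have lt: "nat (B*n2 + CC*n3) < m" using eq m by linarith
        have iv: "int (nat (B*n2 + CC*n3)) = B*n2 + CC*n3" using B0 pos by simp
        obtain b' c' k where h: "b' \<ge> 0" "c' \<ge> 0" "k \<ge> 0" "B*n2 + CC*n3 = k*n1 + b'*n2 + c'*n3"
          "b' < c2" "c' < c3" "(b' < x2 \<or> c' < x3)" using less.IH[OF lt, rule_format, OF B0 iv] by blast
        have "b*n2 + c*n3 = (k + z1)*n1 + b'*n2 + c'*n3" using h(4) eq by (simp add: algebra_simps)
        moreover have "k + z1 \<ge> 0" using h nn by simp
        ultimately show ?thesis using h by blast
      next
        case nc: False
        show ?thesis
        proof (cases "b \<ge> x2 \<and> c \<ge> x3")
          case True
          define B where "B = b - x2"
          define CC where "CC = c - x3"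
          have eq: "B*n2 + CC*n3 = b*n2 + c*n3 - c1*n1" unfolding B_def CC_def using r1 by (simp add: algebra_simps)
          have B0: "B \<ge> 0" "CC \<ge> 0" using True unfolding B_def CC_def by simp_all
          have "B*n2 \<ge> 0" "CC*n3 \<ge> 0" using B0 pos by simp_all
          moreover have "c1*n1 > 0" using nn pos by simp
          ultimately have lt: "nat (B*n2 + CC*n3) < m" using eq m by linarith
          have iv: "int (nat (B*n2 + CC*n3)) = B*n2 + CC*n3" using B0 pos by simp
          obtain b' c' k where h: "b' \<ge> 0" "c' \<ge> 0" "k \<ge> 0" "B*n2 + CC*n3 = k*n1 + b'*n2 + c'*n3"
            "b' < c2" "c' < c3" "(b' < x2 \<or> c' < x3)" using less.IH[OF lt, rule_format, OF B0 iv] by blast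
          have "b*n2 + c*n3 = (k + c1)*n1 + b'*n2 + c'*n3" using h(4) eq by (simp add: algebra_simps)
          moreover have "k + c1 \<ge> 0" using h nn by simp
          ultimately show ?thesis using h by blast
        next
          case False
          then have "b < x2 \<or> c < x3" by auto
          then show ?thesis using b0 c0 nb nc by (intro exI[of _ b] exI[of _ c] exI[of _ 0]) auto
        qed
      qed
    qed
  qed
qed


lemma inS:
  fixes n1 n2 n3 c1 c2 c3 x2 x3 y1 y3 z1 z2 N :: int
  assumes pos: "n1 > 0" "n2 > 0" "n3 > 0" and cop: "coprime n2 n1"
    and r1: "c1*n1 = x2*n2 + x3*n3" and r2: "c2*n2 = y1*n1 + y3*n3" and r3: "c3*n3 = z1*n1 + z2*n2"
    and nn: "c1 \<ge> 1" "y1 \<ge> 1" "z1 \<ge> 1" "x2 \<ge> 0" "x3 \<ge> 0" "y3 \<ge> 0" "z2 \<ge> 0"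
    and N: "N > max ((c2-1)*n2 + (x3-1)*n3) ((x2-1)*n2 + (c3-1)*n3) - n1"
  shows "N \<in> mon3 n1 n2 n3"
proof -
  define j where "j = remq N n2 n1"
  have J: "0 \<le> j" "n1 dvd (j*n2 - N)" using remq_props[OF pos(1) cop, of N] unfolding j_def by auto
  have iv: "int (nat (j*n2)) = j*n2 + 0*n3" using J pos by simp
  obtain b c k where h: "b \<ge> 0" "c \<ge> 0" "k \<ge> 0" "j*n2 + 0*n3 = k*n1 + b*n2 + c*n3"
    "b < c2" "c < c3" "(b < x2 \<or> c < x3)"
    using reduce[OF pos r1 r2 r3 nn, of "nat (j*n2)", rule_format, OF J(1) _ iv] by blast
  define W where "W = b*n2 + c*n3"
  have "W \<le> max ((c2-1)*n2 + (x3-1)*n3) ((x2-1)*n2 + (c3-1)*n3)"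
  proof (cases "c < x3")
    case True
    have "b*n2 \<le> (c2-1)*n2" using h pos by (intro mult_right_mono) auto
    moreover have "c*n3 \<le> (x3-1)*n3" using True pos by (intro mult_right_mono) auto
    ultimately show ?thesis unfolding W_def by simp
  next
    case False
    then have bx: "b < x2" using h by simp
    have "b*n2 \<le> (x2-1)*n2" using bx pos by (intro mult_right_mono) auto
    moreover have "c*n3 \<le> (c3-1)*n3" using h pos by (intro mult_right_mono) auto
    ultimately show ?thesis unfolding W_def by simp
  qed
  then have NW: "N - W > - n1" using N by linarith
  have "N - W = (j*n2 - W) - (j*n2 - N)" by simp
  moreover have "j*n2 - W = k*n1" using h(4) unfolding W_def by simp
  ultimately have "n1 dvd (N - W)" using J(2) by (metis dvd_diff dvd_triv_right)
  then obtain t where t: "N - W = n1*t" by (auto elim: dvdE)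
  have "n1*t > n1*(-1)" using NW t by simp
  then have "t > -1" using pos mult_less_cancel_left_pos by blast
  then have "t \<ge> 0" by simp
  moreover have "N = t*n1 + b*n2 + c*n3" using t unfolding W_def by (simp add: algebra_simps)
  ultimately show ?thesis unfolding mon3_iff using h by blast
qed


theorem mainTheorem5:
  fixes n1 n2 n3 :: int
  assumes pos: "n3 > 0" and ord: "n1 > n2" "n2 > n3"
    and cop: "coprime n1 n2" "coprime n1 n3" "coprime n2 n3"
    and minimal: "n1 \<notin> mon2 n2 n3" "n2 \<notin> mon2 n1 n3" "n3 \<notin> mon2 n1 n2"
  defines "I1 \<equiv> \<lceil>real_of_int (remq (- n3) n1 n2) * real_of_int (remq n3 n2 n1) / real_of_int n3\<rceil>"
    and "I2 \<equiv> \<lceil>real_of_int (remq (- n3) n2 n1) * real_of_int (remq n3 n1 n2) / real_of_int n3\<rceil>"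
    and "I3 \<equiv> \<lceil>real_of_int (remq (- n2) n3 n1) * real_of_int (remq n2 n1 n3) / real_of_int n2\<rceil>"
  defines "C1 \<equiv> Min ((\<lambda>\<alpha>. \<alpha> * n2 - remq (- n3) n1 n2 *
                 \<lfloor>real_of_int (\<alpha> * n1) / real_of_int (remq n3 n2 n1)\<rfloor>) ` {1..I1})"
    and "C2 \<equiv> Min ((\<lambda>\<beta>. \<beta> * n1 - remq (- n3) n2 n1 *
                 \<lfloor>real_of_int (\<beta> * n2) / real_of_int (remq n3 n1 n2)\<rfloor>) ` {1..I2})"
    and "C3 \<equiv> Min ((\<lambda>\<gamma>. \<gamma> * n1 - remq (- n2) n3 n1 *
                 \<lfloor>real_of_int (\<gamma> * n3) / real_of_int (remq n2 n1 n3)\<rfloor>) ` {1..I3})"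
  shows "frobenius (mon3 n1 n2 n3) =
           C1 * n1 + max (remq (C2 * n2) n3 n1 * n3) (remq (C3 * n3) n2 n1 * n2) - n1 - n2 - n3"
proof -
  have n32: "n3 \<ge> 2"
  proof (rule ccontr)
    assume "\<not> n3 \<ge> 2" then have "n3 = 1" using pos by simp
    then have "n1 \<in> mon2 n2 n3" using ord pos by (intro mon2I[of 0 n1]) auto
    then show False using minimal by blast
  qed
  have p1: "n1 > 0" "n2 > 0" using ord pos by auto
  have L1: "C1 \<ge> 1" "C1*n1 \<in> mon2 n2 n3" "\<forall>c. c \<ge> 1 \<longrightarrow> c*n1 \<in> mon2 n2 n3 \<longrightarrow> C1 \<le> c"
    using Lmain[of n1 n2 n3] n32 ord pos cop unfolding C1_def I1_def by auto
  have L2: "C2 \<ge> 1" "C2*n2 \<in> mon2 n1 n3" "\<forall>c. c \<ge> 1 \<longrightarrow> c*n2 \<in> mon2 n1 n3 \<longrightarrow> C2 \<le> c"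
    using Lmain[of n2 n1 n3] n32 ord pos cop unfolding C2_def I2_def by (auto simp: coprime_commute)
  have L3: "C3 \<ge> 1" "C3*n3 \<in> mon2 n1 n2" "\<forall>c. c \<ge> 1 \<longrightarrow> c*n3 \<in> mon2 n1 n2 \<longrightarrow> C3 \<le> c"
    using Lmain[of n3 n1 n2] n32 ord pos cop unfolding C3_def I3_def by (auto simp: coprime_commute)
  have B1: "C1 < n3" using cbound[of n3 n1 n2 C1] n32 p1 cop minimal L1(3) by (auto simp: coprime_commute)
  have B2: "C2 < n3" using cbound[of n3 n2 n1 C2] n32 p1 cop minimal L2(3) by (auto simp: coprime_commute)
  have "n1 \<notin> mon2 n3 n2" using minimal mon2_comm by blast
  then have B3: "C3 < n2" using cbound[of n2 n3 n1 C3] n32 ord p1 cop L3(3) by (auto simp: coprime_commute)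
  obtain x2 x3 where X: "x2 \<ge> 0" "x3 \<ge> 0" "C1*n1 = x2*n2 + x3*n3" using L1(2) mon2_iff by blast
  obtain y1 y3 where Y: "y1 \<ge> 0" "y3 \<ge> 0" "C2*n2 = y1*n1 + y3*n3" using L2(2) mon2_iff by blast
  obtain z1 z2 where Z: "z1 \<ge> 0" "z2 \<ge> 0" "C3*n3 = z1*n1 + z2*n2" using L3(2) mon2_iff by blast
  have x2p: "x2 \<ge> 1"
  proof (rule ccontr)
    assume "\<not> x2 \<ge> 1" then have "x2 = 0" using X by simp
    then have "C1*n1 = x3*n3" using X by simp
    then have "n3 \<le> C1" using dvd_le_lemma[of C1 n1 x3 n3] cop L1 pos p1 by (simp add: coprime_commute)
    then show False using B1 by simp
  qed
  have x3p: "x3 \<ge> 1"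
  proof (rule ccontr)
    assume "\<not> x3 \<ge> 1" then have "x3 = 0" using X by simp
    then have "C1*n1 = x2*n2" using X by simp
    then have "n2 \<le> C1" using dvd_le_lemma[of C1 n1 x2 n2] cop L1 pos p1 by (simp add: coprime_commute)
    then show False using B1 ord by simp
  qed
  have y1p: "y1 \<ge> 1"
  proof (rule ccontr)
    assume "\<not> y1 \<ge> 1" then have "y1 = 0" using Y by simp
    then have "C2*n2 = y3*n3" using Y by simp
    then have "n3 \<le> C2" using dvd_le_lemma[of C2 n2 y3 n3] cop L2 pos p1 by (simp add: coprime_commute)
    then show False using B2 by simp
  qed
  have y3p: "y3 \<ge> 1"
  proof (rule ccontr)
    assume "\<not> y3 \<ge> 1" then have "y3 = 0" using Y by simp
    then have "C2*n2 = y1*n1" using Y by simp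
    then have "n1 \<le> C2" using dvd_le_lemma[of C2 n2 y1 n1] cop L2 pos p1 by (simp add: coprime_commute)
    then show False using B2 ord by simp
  qed
  have z1p: "z1 \<ge> 1"
  proof (rule ccontr)
    assume "\<not> z1 \<ge> 1" then have "z1 = 0" using Z by simp
    then have "C3*n3 = z2*n2" using Z by simp
    then have "n2 \<le> C3" using dvd_le_lemma[of C3 n3 z2 n2] cop L3 pos p1 by (simp add: coprime_commute)
    then show False using B3 by simp
  qed
  have z2p: "z2 \<ge> 1"
  proof (rule ccontr)
    assume "\<not> z2 \<ge> 1" then have "z2 = 0" using Z by simp
    then have "C3*n3 = z1*n1" using Z by simp
    then have "n1 \<le> C3" using dvd_le_lemma[of C3 n3 z1 n1] cop L3 pos p1 by (simp add: coprime_commute)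
    then show False using B3 ord by simp
  qed
  have x2C: "x2 < C2"
  proof (rule ccontr)
    assume "\<not> x2 < C2"
    have e: "(C1 - y1)*n1 = (x2 - C2)*n2 + (x3 + y3)*n3" using X Y by (simp add: algebra_simps)
    have "(x2 - C2)*n2 \<ge> 0" using \<open>\<not> x2 < C2\<close> p1 by simp
    moreover have "(x3 + y3)*n3 > 0" using x3p Y pos by simp
    ultimately have "(C1 - y1)*n1 > 0" using e by linarith
    then have "C1 - y1 \<ge> 1" using p1 by (simp add: zero_less_mult_iff)
    moreover have "(C1 - y1)*n1 \<in> mon2 n2 n3" using e \<open>\<not> x2 < C2\<close> x3p Y
      by (intro mon2I[of "x2 - C2" "x3 + y3"]) auto
    ultimately have "C1 \<le> C1 - y1" using L1(3) by blast
    then show False using y1p by simp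
  qed
  have x3C: "x3 < C3"
  proof (rule ccontr)
    assume "\<not> x3 < C3"
    have e: "(C1 - z1)*n1 = (x2 + z2)*n2 + (x3 - C3)*n3" using X Z by (simp add: algebra_simps)
    have "(x3 - C3)*n3 \<ge> 0" using \<open>\<not> x3 < C3\<close> pos by simp
    moreover have "(x2 + z2)*n2 > 0" using x2p Z p1 by simp
    ultimately have "(C1 - z1)*n1 > 0" using e by linarith
    then have "C1 - z1 \<ge> 1" using p1 by (simp add: zero_less_mult_iff)
    moreover have "(C1 - z1)*n1 \<in> mon2 n2 n3" using e \<open>\<not> x3 < C3\<close> x2p Z
      by (intro mon2I[of "x2 + z2" "x3 - C3"]) auto
    ultimately have "C1 \<le> C1 - z1" using L1(3) by blast
    then show False using z1p by simp
  qed
  have y1C: "y1 \<le> C1"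
  proof (rule ccontr)
    assume a: "\<not> y1 \<le> C1"
    have e: "(C2 - x2)*n2 = (y3 + x3)*n3 + (y1 - C1)*n1" using X Y by (simp add: algebra_simps)
    have "(y1 - C1)*n1 > 0" using a p1 by simp
    moreover have "(y3 + x3)*n3 \<ge> 0" using X Y pos by simp
    ultimately have "(C2 - x2)*n2 > 0" using e by linarith
    then have "C2 - x2 \<ge> 1" using p1 by (simp add: zero_less_mult_iff)
    moreover have "(C2 - x2)*n2 \<in> mon2 n1 n3" using e a X Y
      by (intro mon2I[of "y1 - C1" "y3 + x3"]) (auto simp: algebra_simps)
    ultimately have "C2 \<le> C2 - x2" using L2(3) by blast
    then show False using x2p by simp
  qed
  have z1C: "z1 \<le> C1"
  proof (rule ccontr)
    assume a: "\<not> z1 \<le> C1"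
    have e: "(C3 - x3)*n3 = (z2 + x2)*n2 + (z1 - C1)*n1" using X Z by (simp add: algebra_simps)
    have "(z1 - C1)*n1 > 0" using a p1 by simp
    moreover have "(z2 + x2)*n2 \<ge> 0" using X Z p1 by simp
    ultimately have "(C3 - x3)*n3 > 0" using e by linarith
    then have "C3 - x3 \<ge> 1" using pos by (simp add: zero_less_mult_iff)
    moreover have "(C3 - x3)*n3 \<in> mon2 n1 n2" using e a X Z
      by (intro mon2I[of "z1 - C1" "z2 + x2"]) (auto simp: algebra_simps)
    ultimately have "C3 \<le> C3 - x3" using L3(3) by blast
    then show False using x3p by simp
  qed
  have g3: "C3 \<le> x3 + y3"
  proof -
    have e: "(x3 + y3)*n3 = (C1 - y1)*n1 + (C2 - x2)*n2" using X Y by (simp add: algebra_simps)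
    have "(x3 + y3)*n3 \<in> mon2 n1 n2" using e y1C x2C by (intro mon2I[of "C1 - y1" "C2 - x2"]) auto
    then show ?thesis using L3(3) x3p Y by auto
  qed
  have g2: "C2 \<le> x2 + z2"
  proof -
    have e: "(x2 + z2)*n2 = (C1 - z1)*n1 + (C3 - x3)*n3" using X Z by (simp add: algebra_simps)
    have "(x2 + z2)*n2 \<in> mon2 n1 n3" using e z1C x3C by (intro mon2I[of "C1 - z1" "C3 - x3"]) auto
    then show ?thesis using L2(3) x2p Z by auto
  qed
  have e23: "x3 + y3 = C3 \<and> x2 + z2 = C2"
  proof (rule ccontr)
    assume a: "\<not> (x3 + y3 = C3 \<and> x2 + z2 = C2)"
    have e: "(C1 - y1 - z1)*n1 = (x2 + z2 - C2)*n2 + (x3 + y3 - C3)*n3"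
      using X Y Z by (simp add: algebra_simps)
    have "(x2 + z2 - C2)*n2 \<ge> 0" "(x3 + y3 - C3)*n3 \<ge> 0" using g2 g3 p1 pos by simp_all
    moreover have "(x2 + z2 - C2)*n2 > 0 \<or> (x3 + y3 - C3)*n3 > 0" using a g2 g3 p1 pos by auto
    ultimately have "(C1 - y1 - z1)*n1 > 0" using e by linarith
    then have "C1 - y1 - z1 \<ge> 1" using p1 by (simp add: zero_less_mult_iff)
    moreover have "(C1 - y1 - z1)*n1 \<in> mon2 n2 n3" using e g2 g3
      by (intro mon2I[of "x2 + z2 - C2" "x3 + y3 - C3"]) auto
    ultimately have "C1 \<le> C1 - y1 - z1" using L1(3) by blast
    then show False using y1p z1p by simp
  qed
  have R23: "remq (C2 * n2) n3 n1 = y3"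
    by (rule remq_eq) (use p1 cop e23 x3p B3 ord Y in \<open>auto simp: coprime_commute\<close>)
  have R32: "remq (C3 * n3) n2 n1 = z2"
    by (rule remq_eq) (use p1 cop e23 x2p B2 ord Z in \<open>auto simp: coprime_commute\<close>)
  define F0 where "F0 = C1 * n1 + max (y3 * n3) (z2 * n2) - n1 - n2 - n3"
  have c3eq: "C3 = x3 + y3" and c2eq: "C2 = x2 + z2" using e23 by auto
  have EA: "C1*n1 + y3*n3 - n1 - n2 - n3 = (x2 - 1)*n2 + (C3 - 1)*n3 - n1"
    using X(3) unfolding c3eq by (simp add: algebra_simps)
  have EB: "C1*n1 + z2*n2 - n1 - n2 - n3 = (C2 - 1)*n2 + (x3 - 1)*n3 - n1"
    using X(3) unfolding c2eq by (simp add: algebra_simps)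
  have F0m: "F0 = max ((C2-1)*n2 + (x3-1)*n3) ((x2-1)*n2 + (C3-1)*n3) - n1"
    unfolding F0_def max_def using EA EB by (auto split: if_splits)
  have notin: "F0 \<notin> mon3 n1 n2 n3"
  proof (cases "z2 * n2 \<le> y3 * n3")
    case True
    then have "F0 = (x2 - 1)*n2 + (C3 - 1)*n3 - n1" unfolding F0_def using EA
      by (simp add: max_def)
    moreover have "(x2 - 1)*n2 + (C3 - 1)*n3 - n1 \<notin> mon3 n1 n2 n3"
      using notinS[of n1 n2 n3 C1 C2 C3 x2 x3] p1 pos L1(3) L2(3) L3(3) X x2C by auto
    ultimately show ?thesis by simp
  next
    case False
    then have "F0 = (x3 - 1)*n3 + (C2 - 1)*n2 - n1" unfolding F0_def using EB
      by (simp add: max_def algebra_simps)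
    moreover have "\<forall>k. k \<ge> 1 \<longrightarrow> k*n1 \<in> mon2 n3 n2 \<longrightarrow> C1 \<le> k" using L1(3) mon2_comm by blast
    then have "(x3 - 1)*n3 + (C2 - 1)*n2 - n1 \<notin> mon3 n1 n3 n2"
      using notinS[of n1 n3 n2 C1 C3 C2 x3 x2] p1 pos L2(3) L3(3) X x3C by (auto simp: add.commute)
    ultimately show ?thesis using mon3_comm23 by blast
  qed
  have inall: "N \<in> mon3 n1 n2 n3" if "N > F0" for N
    using inS[of n1 n2 n3 C1 x2 x3 C2 y1 y3 C3 z1 z2 N] p1 pos cop X Y Z L1(1) y1p z1p that F0m
    by (auto simp: coprime_commute)
  have "frobenius (mon3 n1 n2 n3) = F0"
    unfolding frobenius_def
  proof (rule Greatest_equality)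
    show "F0 \<notin> mon3 n1 n2 n3" by (rule notin)
  next
    fix y assume "y \<notin> mon3 n1 n2 n3"
    then show "y \<le> F0" using inall by force
  qed
  then show ?thesis unfolding F0_def R23 R32 .
qed

end
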